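(* Let $n\ge2$, $y\in\mathbb C$, and let $Y\subset\mathbb C^2$ be the span of $(1,y)^\top$. Let $A_Y$ be the operator on $H^{-1}(T)$ with $D(A_Y)=\{u\in H^1(0,1):\mu_n(u)=y\mu_0(u)\}$ and $A_Yu=\mathrm{Id}_m^{-1}(-u''+\gamma(u)(1-x)^{n-2})-c(u)\delta_1$, where $c(u)=-u(1)-(u(0)-u(1))\overline y$. Then $D(A_Y^2)=\{u\in H^3(0,1):\ \mu_n(u)=y\mu_0(u),\ \mu_n(u''-\gamma(u)(1-x)^{n-2})=y\,\mu_0(u''-\gamma(u)(1-x)^{n-2}),\ \mu_0(u''-\gamma(u)(1-x)^{n-2})=(u(1)-u(0))\overline y-u(1)\}$, and $A_Yu=-u''+\gamma(u)(1-x)^{n-2}$ for all $u\in D(A_Y^2)$.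
   Context: $H^1(T):=\{u\in H^1(0,1):u(0)=u(1)\}$, $H^{-1}(T)$ its (anti)dual with pivot $L^2(0,1)$; $\delta_1\in H^{-1}(T)$ is $v\mapsto v(1)$. For $k\in\mathbb N_0$, $\mu_k(f):=\int_0^1(1-x)^kf\,dx$ ($f\in L^1$), $\mu_0(f):=\langle f,1\rangle$ on $H^{-1}(T)$. $\gamma(f):=(n-1)(2n-1)f(0)-(n-1)^2(2n-1)\mu_{n-2}(f)$ for $f\in H^1(0,1)$. For $g\in H^{-1}(0,1)$, $\mathrm{Id}_m^{-1}g$ is the unique $w\in H^{-1}(T)$ with $\mu_0(w)=0$ whose restriction to $H^1_0(0,1)$ is $g$. $D(A_Y^2):=\{u\in D(A_Y):A_Yu\in D(A_Y)\}$. *)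

theory Defs
  imports "HOL-Analysis.Analysis"
begin

type_synonym fn = "real \<Rightarrow> complex"
type_synonym functional = "fn \<Rightarrow> complex"

definition L2 :: "fn \<Rightarrow> bool" where
  "L2 g \<longleftrightarrow> set_borel_measurable lborel {0..1} g \<and>
     set_integrable lborel {0..1} (\<lambda>x. (cmod (g x))^2)"

text \<open>g is a weak derivative of u on (0,1) (u taken as its continuous representative).\<close>
definition is_wderiv :: "fn \<Rightarrow> fn \<Rightarrow> bool" where
  "is_wderiv u g \<longleftrightarrow> L2 g \<and>
     (\<forall>x\<in>{0..1}. u x = u 0 + (LINT t:{0..x}|lborel. g t))"

definition H1 :: "fn set" where
  "H1 = {u. \<exists>g. is_wderiv u g}"

definition H1T :: "fn set" where
  "H1T = {u \<in> H1. u 0 = u 1}"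

definition H10 :: "fn set" where
  "H10 = {u \<in> H1. u 0 = 0 \<and> u 1 = 0}"

definition H3 :: "fn set" where
  "H3 = {u. \<exists>u1 u2. is_wderiv u u1 \<and> is_wderiv u1 u2 \<and> u2 \<in> H1}"

definition wd :: "fn \<Rightarrow> fn" where
  "wd u = (SOME g. is_wderiv u g)"

definition H1norm :: "fn \<Rightarrow> real" where
  "H1norm v = sqrt (LINT x:{0..1}|lborel. (cmod (v x))^2 + (cmod (wd v x))^2)"

text \<open>H^{-1}(T): bounded linear functionals on H^1(T) (extensional: 0 outside H^1(T)),
  with the L^2 pivot realised by the bilinear pairing.\<close>
definition Hm1T :: "functional set" where
  "Hm1T = {F. (\<forall>v. v \<notin> H1T \<longrightarrow> F v = 0) \<and>
     (\<forall>v\<in>H1T. \<forall>w\<in>H1T. \<forall>a b. F (\<lambda>x. a * v x + b * w x) = a * F v + b * F w) \<and>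
     (\<exists>C. \<forall>v\<in>H1T. cmod (F v) \<le> C * H1norm v)}"

definition emb :: "fn \<Rightarrow> functional" where
  "emb f = (\<lambda>v. LINT x:{0..1}|lborel. f x * v x)"

definition delta1 :: functional where
  "delta1 = (\<lambda>v. v 1)"

definition mu :: "nat \<Rightarrow> fn \<Rightarrow> complex" where
  "mu k f = (LINT x:{0..1}|lborel. of_real ((1 - x) ^ k) * f x)"

definition mu0H :: "functional \<Rightarrow> complex" where
  "mu0H F = F (\<lambda>_. 1)"

definition gamma :: "nat \<Rightarrow> fn \<Rightarrow> complex" where
  "gamma n f = of_nat ((n - 1) * (2 * n - 1)) * f 0
     - of_nat ((n - 1)^2 * (2 * n - 1)) * mu (n - 2) f"

text \<open>Id_m^{-1} g for g in H^{-1}(0,1) (given as a functional on H^1_0(0,1)).\<close>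
definition Idm_inv :: "functional \<Rightarrow> functional" where
  "Idm_inv g = (THE w. w \<in> Hm1T \<and> mu0H w = 0 \<and> (\<forall>\<phi>\<in>H10. w \<phi> = g \<phi>))"

text \<open>The element -u'' + gamma(u)(1-x)^(n-2) of H^{-1}(0,1), for u in H^1(0,1):
  \<langle>-u'',\<phi>\<rangle> = \<integral> u' \<phi>' for \<phi> in H^1_0.\<close>
definition gU :: "nat \<Rightarrow> fn \<Rightarrow> functional" where
  "gU n u = (\<lambda>\<phi>. (LINT x:{0..1}|lborel. wd u x * wd \<phi> x)
      + gamma n u * (LINT x:{0..1}|lborel. of_real ((1 - x) ^ (n - 2)) * \<phi> x))"

definition cY :: "complex \<Rightarrow> fn \<Rightarrow> complex" where
  "cY y u = - u 1 - (u 0 - u 1) * cnj y"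

definition D_AY :: "nat \<Rightarrow> complex \<Rightarrow> fn set" where
  "D_AY n y = {u \<in> H1. mu n u = y * mu 0 u}"

definition A_Y :: "nat \<Rightarrow> complex \<Rightarrow> fn \<Rightarrow> functional" where
  "A_Y n y u = (\<lambda>v. Idm_inv (gU n u) v - cY y u * delta1 v)"

definition D_AY2 :: "nat \<Rightarrow> complex \<Rightarrow> fn set" where
  "D_AY2 n y = {u \<in> D_AY n y. \<exists>w \<in> D_AY n y. \<forall>v \<in> H1T. A_Y n y u v = emb w v}"

end

theory Submission
  imports Defs
begin

abbreviation "S01 \<equiv> {0..1::real}"

lemma sbm_comp:
  fixes f :: "real \<Rightarrow> 'a::real_normed_vector" and h :: "'a \<Rightarrow> 'b::real_normed_vector"
  assumes "set_borel_measurable lborel A f" "h \<in> borel_measurable borel" "h 0 = 0"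
  shows "set_borel_measurable lborel A (\<lambda>x. h (f x))"
proof -
  have "(\<lambda>x. indicator A x *\<^sub>R h (f x)) = (\<lambda>x. h (indicator A x *\<^sub>R f x))"
    using assms(3) by (auto simp: indicator_def)
  moreover have "(\<lambda>x. h (indicator A x *\<^sub>R f x)) \<in> borel_measurable lborel"
    using measurable_compose[OF assms(1)[unfolded set_borel_measurable_def] assms(2)] .
  ultimately show ?thesis unfolding set_borel_measurable_def by simp
qed

lemma sbm_mult:
  fixes f g :: "real \<Rightarrow> complex"
  assumes "set_borel_measurable lborel A f" "set_borel_measurable lborel A g"
  shows "set_borel_measurable lborel A (\<lambda>x. f x * g x)"
proof -
  have "(\<lambda>x. indicator A x *\<^sub>R (f x * g x)) = (\<lambda>x. (indicator A x *\<^sub>R f x) * (indicator A x *\<^sub>R g x))"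
    by (auto simp: indicator_def)
  moreover have "(\<lambda>x. (indicator A x *\<^sub>R f x) * (indicator A x *\<^sub>R g x)) \<in> borel_measurable lborel"
    using assms unfolding set_borel_measurable_def by (rule borel_measurable_times)
  ultimately show ?thesis unfolding set_borel_measurable_def by simp
qed

lemma sbm_add:
  fixes f g :: "real \<Rightarrow> 'a::{real_normed_vector,second_countable_topology}"
  assumes "set_borel_measurable lborel A f" "set_borel_measurable lborel A g"
  shows "set_borel_measurable lborel A (\<lambda>x. f x + g x)"
proof -
  have "(\<lambda>x. indicator A x *\<^sub>R (f x + g x)) = (\<lambda>x. (indicator A x *\<^sub>R f x) + (indicator A x *\<^sub>R g x))"
    by (auto simp: indicator_def)
  moreover have "(\<lambda>x. (indicator A x *\<^sub>R f x) + (indicator A x *\<^sub>R g x)) \<in> borel_measurable lborel"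
    using assms unfolding set_borel_measurable_def by (rule borel_measurable_add)
  ultimately show ?thesis unfolding set_borel_measurable_def by simp
qed

lemma sbm_cont:
  fixes f :: "real \<Rightarrow> 'a::real_normed_vector"
  assumes "continuous_on S01 f"
  shows "set_borel_measurable lborel S01 f"
  using set_measurable_continuous_on[OF _ assms] by (simp add: set_borel_measurable_def)

lemma sbm_cmod2:
  fixes f :: "real \<Rightarrow> complex"
  assumes "set_borel_measurable lborel A f"
  shows "set_borel_measurable lborel A (\<lambda>x. (cmod (f x))^2)"
  by (rule sbm_comp[OF assms, where h="\<lambda>z. (cmod z)^2"]) auto

lemma sbm_cmod:
  fixes f :: "real \<Rightarrow> complex"
  assumes "set_borel_measurable lborel A f"
  shows "set_borel_measurable lborel A (\<lambda>x. cmod (f x))"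
  by (rule sbm_comp[OF assms, where h="\<lambda>z. cmod z"]) auto

lemma sbm_cnj:
  fixes f :: "real \<Rightarrow> complex"
  assumes "set_borel_measurable lborel A f"
  shows "set_borel_measurable lborel A (\<lambda>x. cnj (f x))"
  by (rule sbm_comp[OF assms, where h="cnj"]) (simp_all add: borel_measurable_continuous_onI continuous_on_cnj[OF continuous_on_id])

lemma sbm_cmult:
  fixes f :: "real \<Rightarrow> complex"
  assumes "set_borel_measurable lborel A f"
  shows "set_borel_measurable lborel A (\<lambda>x. c * f x)"
  by (rule sbm_comp[OF assms, where h="\<lambda>z. c * z"]) auto


lemma si_bound:
  fixes g :: "real \<Rightarrow> 'a::{banach, second_countable_topology}"
  assumes "set_borel_measurable lborel A g"
    and "set_integrable lborel A (G::real\<Rightarrow>real)"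
    and "\<And>x. x \<in> A \<Longrightarrow> norm (g x) \<le> G x"
  shows "set_integrable lborel A g"
  by (rule set_integrable_bound[OF assms(2,1)]) (auto intro!: AE_I2 order_trans[OF assms(3)])

lemma si_const: "set_integrable lborel S01 (\<lambda>x. c::'a::{banach, second_countable_topology})"
  by (simp add: set_integrable_def)

lemma x_le_sq: "(x::real) \<le> 1 + x^2"
proof -
  have "0 \<le> (x - 1/2)^2" by simp
  then show ?thesis by (simp add: power2_eq_square algebra_simps)
qed

lemma ab_le: "0 \<le> (a::real) \<Longrightarrow> 0 \<le> b \<Longrightarrow> a * b \<le> a^2 + b^2"
proof -
  have "0 \<le> (a - b)^2" by simp
  assume "0 \<le> a" "0 \<le> b"
  then have "0 \<le> a*b" by simp
  with \<open>0 \<le> (a - b)^2\<close> show ?thesis by (simp add: power2_eq_square algebra_simps)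
qed

lemma L2_si: assumes "L2 g" shows "set_integrable lborel S01 g"
proof -
  have m: "set_borel_measurable lborel S01 g" and i: "set_integrable lborel S01 (\<lambda>x. (cmod (g x))^2)"
    using assms by (auto simp: L2_def)
  have "set_integrable lborel S01 (\<lambda>x. 1 + (cmod (g x))^2)"
    by (rule set_integral_add(1)[OF si_const i])
  then show ?thesis by (rule si_bound[OF m]) (rule x_le_sq)
qed

lemma L2_mult: assumes "L2 f" "L2 g" shows "set_integrable lborel S01 (\<lambda>x. f x * g x)"
proof -
  have m: "set_borel_measurable lborel S01 (\<lambda>x. f x * g x)"
    using assms by (auto simp: L2_def intro!: sbm_mult)
  have "set_integrable lborel S01 (\<lambda>x. (cmod (f x))^2 + (cmod (g x))^2)"
    using assms by (intro set_integral_add(1)) (auto simp: L2_def)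
  then show ?thesis by (rule si_bound[OF m]) (simp add: norm_mult ab_le)
qed

lemma cont_L2: assumes "continuous_on S01 f" shows "L2 f"
proof -
  have "continuous_on S01 (\<lambda>x. (cmod (f x))^2)"
    by (intro continuous_intros assms)
  then show ?thesis unfolding L2_def
    using sbm_cont[OF assms] borel_integrable_atLeastAtMost' by blast
qed

lemma sq_bound2: "((a::real) + b)^2 \<le> 2*a^2 + 2*b^2"
proof -
  have "0 \<le> (a - b)^2" by simp
  then show ?thesis by (simp add: power2_eq_square algebra_simps)
qed

lemma L2_lin:
  assumes "L2 f" "L2 g"
  shows "L2 (\<lambda>x. a * f x + b * g x)"
proof -
  have mf: "set_borel_measurable lborel S01 f" and mg: "set_borel_measurable lborel S01 g"
    and f2: "set_integrable lborel S01 (\<lambda>x. (cmod (f x))^2)"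
    and g2: "set_integrable lborel S01 (\<lambda>x. (cmod (g x))^2)"
    using assms by (auto simp: L2_def)
  have m: "set_borel_measurable lborel S01 (\<lambda>x. a * f x + b * g x)"
    by (intro sbm_add sbm_cmult mf mg)
  have i: "set_integrable lborel S01 (\<lambda>x. 2*(cmod a)^2 * (cmod (f x))^2 + 2*(cmod b)^2 *(cmod (g x))^2)"
    by (intro set_integral_add(1) set_integrable_mult_right f2 g2)
  have "set_integrable lborel S01 (\<lambda>x. (cmod (a * f x + b * g x))^2)"
  proof (rule si_bound[OF sbm_cmod2[OF m] i])
    fix x
    have "cmod (a * f x + b * g x) \<le> cmod a * cmod (f x) + cmod b * cmod (g x)"
      by (metis norm_mult norm_triangle_ineq)
    then have "(cmod (a * f x + b * g x))^2 \<le> (cmod a * cmod (f x) + cmod b * cmod (g x))^2"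
      by (simp add: power_mono)
    also have "\<dots> \<le> 2*(cmod a)^2 * (cmod (f x))^2 + 2*(cmod b)^2 *(cmod (g x))^2"
      using sq_bound2[of "cmod a * cmod (f x)" "cmod b * cmod (g x)"] by (simp add: power_mult_distrib)
    finally show "norm ((cmod (a * f x + b * g x))^2) \<le> 2*(cmod a)^2 * (cmod (f x))^2 + 2*(cmod b)^2 *(cmod (g x))^2"
      by simp
  qed
  then show ?thesis using m by (simp add: L2_def)
qed


lemma si_sub: "set_integrable lborel S01 (g::real\<Rightarrow>complex) \<Longrightarrow> x \<le> 1 \<Longrightarrow> set_integrable lborel {0..x} g"
  by (erule set_integrable_subset) auto

lemma wd_L2: "is_wderiv u g \<Longrightarrow> L2 g" by (simp add: is_wderiv_def)

lemma wd_int: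
  assumes "is_wderiv u g" "x \<in> S01"
  shows "u x = u 0 + integral {0..x} g"
proof -
  have L: "L2 g" using assms(1) by (simp add: is_wderiv_def)
  have "x \<le> 1" using assms(2) by simp
  have i: "set_integrable lborel {0..x} g" 
    by (rule si_sub[OF L2_si[OF L] \<open>x \<le> 1\<close>])
  have e: "u x = u 0 + (LINT t:{0..x}|lborel. g t)" using assms unfolding is_wderiv_def by blast
  show ?thesis using e set_borel_integral_eq_integral(2)[OF i] by simp
qed

lemma wd_cont:
  assumes "is_wderiv u g" shows "continuous_on S01 u"
proof -
  have L: "L2 g" using assms(1) by (simp add: is_wderiv_def)
  have gi: "g integrable_on S01"
    by (rule set_borel_integral_eq_integral(1)[OF L2_si[OF L]])
  have c1: "continuous_on S01 (\<lambda>x. integral {0..x} g)"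
    by (rule indefinite_integral_continuous_1[OF gi])
  have c2: "continuous_on S01 (\<lambda>x. u 0 + integral {0..x} g)"
    by (rule continuous_on_add[OF continuous_on_const c1])
  show ?thesis
  proof (rule continuous_on_eq[OF c2])
    fix x assume "x \<in> S01" then show "u 0 + integral {0..x} g = u x"
      by (rule sym[OF wd_int[OF assms]])
  qed
qed

lemma wd_L2u: "is_wderiv u g \<Longrightarrow> L2 u"
  by (rule cont_L2[OF wd_cont])

lemma H1_L2: "u \<in> H1 \<Longrightarrow> L2 u"
  by (auto simp: H1_def intro: wd_L2u)

lemma wd_wd: "u \<in> H1 \<Longrightarrow> is_wderiv u (wd u)"
  unfolding H1_def wd_def by (simp add: someI_ex)

lemma wd_lin:
  assumes "is_wderiv u g" "is_wderiv v h"
  shows "is_wderiv (\<lambda>x. a * u x + b * v x) (\<lambda>x. a * g x + b * h x)"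
  unfolding is_wderiv_def
proof (intro conjI ballI)
  show "L2 (\<lambda>x. a * g x + b * h x)" using assms by (intro L2_lin) (auto simp: is_wderiv_def)
  fix x :: real assume x: "x \<in> S01"
  have x1: "x \<le> 1" using x by simp
  have ig: "set_integrable lborel {0..x} g" and ih: "set_integrable lborel {0..x} h"
    using si_sub[OF L2_si[OF wd_L2[OF assms(1)]] x1] si_sub[OF L2_si[OF wd_L2[OF assms(2)]] x1] .
  have "(LINT t:{0..x}|lborel. a * g t + b * h t) = (LINT t:{0..x}|lborel. a * g t) + (LINT t:{0..x}|lborel. b * h t)"
    by (rule set_integral_add(2)) (use ig ih in auto)
  also have "\<dots> = a * (LINT t:{0..x}|lborel. g t) + b * (LINT t:{0..x}|lborel. h t)"
    by simp
  finally have "(LINT t:{0..x}|lborel. a * g t + b * h t) = a * (LINT t:{0..x}|lborel. g t) + b * (LINT t:{0..x}|lborel. h t)" .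
  moreover have "u x = u 0 + (LINT t:{0..x}|lborel. g t)" "v x = v 0 + (LINT t:{0..x}|lborel. h t)"
    using assms x unfolding is_wderiv_def by blast+
  ultimately show "a * u x + b * v x = a * u 0 + b * v 0 + (LINT t:{0..x}|lborel. a * g t + b * h t)"
    by (simp add: algebra_simps)
qed

lemma wd_const: "is_wderiv (\<lambda>_. c) (\<lambda>_. 0)"
  unfolding is_wderiv_def by (auto intro: cont_L2)

lemma LINT_00: assumes "L2 g" shows "(LINT t:{0..0::real}|lborel. g t) = 0"
proof -
  have i: "set_integrable lborel {0..0} g" by (rule si_sub[OF L2_si[OF assms]]) simp
  show ?thesis unfolding set_borel_integral_eq_integral(2)[OF i] by simp
qed

lemma wd_anti:
  assumes "L2 g" shows "is_wderiv (\<lambda>x. c + (LINT t:{0..x}|lborel. g t)) g"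
  unfolding is_wderiv_def using assms LINT_00[OF assms] by simp


lemma half_le: "(h::real) \<le> (1-x)/2 \<Longrightarrow> x < 1 \<Longrightarrow> x + h \<le> 1" by (simp add: field_simps)

lemma ae_zero:
  fixes k :: "real \<Rightarrow> complex"
  assumes si: "set_integrable lborel S01 k" and z: "\<And>x. x \<in> S01 \<Longrightarrow> (LINT t:{0..x}|lborel. k t) = 0"
  shows "AE x in lborel. x \<in> S01 \<longrightarrow> k x = 0"
proof -
  define f where "f = (\<lambda>x. indicator S01 x *\<^sub>R k x)"
  have "integrable lborel f" using si unfolding set_integrable_def f_def .
  then have fi: "f integrable_on UNIV"
    using has_integral_integral_lborel integrable_on_def by blast
  have fab: "\<And>a b. f integrable_on cbox a b" by (rule integrable_on_subcbox[OF fi]) simp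
  obtain N where N: "negligible N" and H: "\<And>x e. \<lbrakk>x \<notin> N; 0 < e\<rbrakk> \<Longrightarrow>
               \<exists>d>0. \<forall>h. 0 < h \<and> h < d \<longrightarrow>
                         norm(integral (cbox x (x + h *\<^sub>R One)) f /\<^sub>R h ^ DIM(real) - f x) < e"
    using integrable_ccontinuous_explicit[OF fab] by blast
  have Z: "integral {0..y} f = 0" if "y \<in> S01" for y
  proof -
    have "integral {0..y} f = integral {0..y} k" by (rule integral_cong) (use that in \<open>auto simp: f_def\<close>)
    also have "\<dots> = (LINT t:{0..y}|lborel. k t)"
      using set_borel_integral_eq_integral(2)[OF si_sub[OF si]] that by simp
    also have "\<dots> = 0" using z that .
    finally show ?thesis .
  qed
  have key: "k x = 0" if x: "x \<in> {0..<1}" "x \<notin> N" for x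
  proof (rule ccontr)
    assume ne: "k x \<noteq> 0"
    have fx: "f x = k x" using x by (simp add: f_def)
    obtain d where d: "d>0" "\<forall>h. 0 < h \<and> h < d \<longrightarrow>
                         norm(integral (cbox x (x + h *\<^sub>R One)) f /\<^sub>R h ^ DIM(real) - f x) < norm (k x)"
      using H[OF x(2), of "norm (k x)"] ne by auto
    define h where "h = min (d/2) ((1-x)/2)"
    have h12: "h \<le> (1-x)/2" "h \<le> d/2" unfolding h_def by (rule min.cobounded2, rule min.cobounded1)
    have h0: "0 < h" using d x by (auto simp: h_def)
    have x1: "x < 1" "0 \<le> x" using x by auto
    have h3: "x + h \<le> 1" by (rule half_le[OF h12(1) x1(1)])
    have h: "0 < h" "h < d" "x + h \<le> 1" using d h12 h0 h3 by linarith+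
    have fi2: "f integrable_on {0..x+h}" using fab[of 0 "x+h"] by simp
    have "integral {0..x} f + integral {x..x+h} f = integral {0..x+h} f"
      by (rule Henstock_Kurzweil_Integration.integral_combine[OF _ _ fi2]) (use x h in auto)
    then have "integral {x..x+h} f = 0" using Z[of x] Z[of "x+h"] h x by simp
    moreover have "cmod (integral {x..x + h} f /\<^sub>R h - f x) < cmod (k x)" using d(2) h by simp
    ultimately have "norm (f x) < norm (k x)" by simp
    then show False using fx by simp
  qed
  have "negligible (insert 1 N)" using N by simp
  hence nl: "insert 1 N \<in> null_sets lebesgue" using negligible_iff_null_sets by blast
  have "AE x in lebesgue. x \<in> S01 \<longrightarrow> k x = 0"
  proof (rule AE_I'[OF nl])
    show "{x \<in> space lebesgue. \<not> (x \<in> S01 \<longrightarrow> k x = 0)} \<subseteq> insert 1 N"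
    proof
      fix x assume "x \<in> {x \<in> space lebesgue. \<not> (x \<in> S01 \<longrightarrow> k x = 0)}"
      then have x: "x \<in> S01" "k x \<noteq> 0" by auto
      show "x \<in> insert 1 N"
      proof (rule ccontr)
        assume "x \<notin> insert 1 N"
        then have "x \<in> {0..<1}" "x \<notin> N" using x(1) by auto
        then show False using key x(2) by blast
      qed
    qed
  qed
  thus ?thesis by (simp add: AE_completion_iff)
qed


lemma ab_lt: "(x0::real) \<in> S01 \<Longrightarrow> d > 0 \<Longrightarrow> max 0 (x0 - d/2) < min 1 (x0 + d/2)"
  by (auto simp: field_simps max_def min_def)

lemma dist_lt: "max 0 (x0 - d/2) \<le> (x::real) \<Longrightarrow> x \<le> min 1 (x0 + d/2) \<Longrightarrow> d > 0 \<Longrightarrow> dist x x0 < d"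
  by (auto simp: dist_real_def abs_less_iff field_simps max_def min_def split: if_splits)

lemma cont_ae_eq:
  fixes f g :: "real \<Rightarrow> complex"
  assumes cf: "continuous_on S01 f" and cg: "continuous_on S01 g"
    and ae: "AE x in lborel. x \<in> S01 \<longrightarrow> f x = g x" and x0: "x0 \<in> S01"
  shows "f x0 = g x0"
proof (rule ccontr)
  assume ne: "f x0 \<noteq> g x0"
  define k where "k = (\<lambda>x. f x - g x)"
  have ck: "continuous_on S01 k" unfolding k_def by (intro continuous_intros cf cg)
  have pos: "0 < cmod (k x0)" using ne by (simp add: k_def)
  obtain d where d: "d > 0" "\<forall>x'\<in>S01. dist x' x0 < d \<longrightarrow> dist (k x') (k x0) < cmod (k x0)"
    using ck x0 pos unfolding continuous_on_iff by blast
  obtain N where N: "{x \<in> space lborel. \<not> (x \<in> S01 \<longrightarrow> f x = g x)} \<subseteq> N" "emeasure lborel N = 0" "N \<in> sets lborel"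
    using ae by (rule AE_E)
  define a where "a = max 0 (x0 - d/2)"
  define b where "b = min 1 (x0 + d/2)"
  have ab: "a < b" unfolding a_def b_def by (rule ab_lt[OF x0 d(1)])
  have sub: "{a..b} \<subseteq> N"
  proof
    fix x assume x: "x \<in> {a..b}"
    have xS: "x \<in> S01" using x by (auto simp: a_def b_def)
    have "dist x x0 < d" using x d(1) dist_lt[of x0 d x] by (simp add: a_def b_def)
    hence "dist (k x) (k x0) < cmod (k x0)" using d xS by blast
    hence "k x \<noteq> 0" by (auto simp: dist_norm)
    hence "f x \<noteq> g x" by (simp add: k_def)
    thus "x \<in> N" using N(1) xS by auto
  qed
  have "emeasure lborel {a..b} \<le> emeasure lborel N" by (rule emeasure_mono[OF sub N(3)])
  hence "ennreal (b - a) \<le> 0" using ab N(2) by simp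
  thus False using ab by simp
qed

lemma wd_ae:
  assumes "is_wderiv u g" "is_wderiv u g'"
  shows "AE x in lborel. x \<in> S01 \<longrightarrow> g x = g' x"
proof -
  have sg: "set_integrable lborel S01 g" and sg': "set_integrable lborel S01 g'"
    using L2_si[OF wd_L2[OF assms(1)]] L2_si[OF wd_L2[OF assms(2)]] .
  have "AE x in lborel. x\<in>S01 \<longrightarrow> g x - g' x = 0"
  proof (rule ae_zero)
    show "set_integrable lborel S01 (\<lambda>x. g x - g' x)" by (rule set_integral_diff(1)[OF sg sg'])
    fix x assume x: "x \<in> S01"
    have x1: "x \<le> 1" using x by simp
    have e1: "u x = u 0 + (LINT t:{0..x}|lborel. g t)" and e2: "u x = u 0 + (LINT t:{0..x}|lborel. g' t)"
      using assms x unfolding is_wderiv_def by blast+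
    have "(LINT t:{0..x}|lborel. g t - g' t) = (LINT t:{0..x}|lborel. g t) - (LINT t:{0..x}|lborel. g' t)"
      by (rule set_integral_diff(2)[OF si_sub[OF sg x1] si_sub[OF sg' x1]])
    also have "\<dots> = 0" using e1 e2 by simp
    finally show "(LINT t:{0..x}|lborel. g t - g' t) = 0" .
  qed
  thus ?thesis by (rule eventually_mono) simp
qed

lemma LINT_congAE:
  fixes f f' :: "real \<Rightarrow> complex"
  assumes "set_integrable lborel A f" "set_integrable lborel A f'" "A \<subseteq> S01"
    "AE x in lborel. x \<in> S01 \<longrightarrow> f x = f' x"
  shows "(LINT x:A|lborel. f x) = (LINT x:A|lborel. f' x)"
proof -
  have "AE x in lborel. indicator A x *\<^sub>R (f x - f' x) = 0"
    using assms(4) by eventually_elim (use assms(3) in \<open>auto simp: indicator_def\<close>)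
  then have "(LINT x:A|lborel. f x - f' x) = 0"
    unfolding set_lebesgue_integral_def by (rule integral_eq_zero_AE)
  then show ?thesis using set_integral_diff(2)[OF assms(1,2)] by simp
qed

lemma ae_sym: "AE x in lborel. x \<in> S01 \<longrightarrow> f x = g x \<Longrightarrow> AE x in lborel. x \<in> S01 \<longrightarrow> g x = f x"
  by (erule eventually_mono) simp

lemma wd_congAE:
  assumes "is_wderiv u g" "L2 g'" "AE x in lborel. x \<in> S01 \<longrightarrow> g x = g' x"
  shows "is_wderiv u g'"
  unfolding is_wderiv_def
proof (intro conjI ballI)
  show "L2 g'" by fact
  fix x assume x: "x \<in> S01"
  have x1: "x \<le> 1" using x by simp
  have "u x = u 0 + (LINT t:{0..x}|lborel. g t)" using assms(1) x unfolding is_wderiv_def by blast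
  also have "(LINT t:{0..x}|lborel. g t) = (LINT t:{0..x}|lborel. g' t)"
    by (rule LINT_congAE[OF si_sub[OF L2_si[OF wd_L2[OF assms(1)]] x1] si_sub[OF L2_si[OF assms(2)] x1] _ assms(3)])
      (use x1 in auto)
  finally show "u x = u 0 + (LINT t:{0..x}|lborel. g' t)" .
qed


lemma fubini_tri:
  fixes g h :: "real \<Rightarrow> complex"
  assumes sg: "set_integrable lborel S01 g" and sh: "set_integrable lborel S01 h"
    and mg: "set_borel_measurable lborel S01 g" and mh: "set_borel_measurable lborel S01 h"
  shows "(LINT x:S01|lborel. g x * (LINT t:{0..x}|lborel. h t)) = (LINT t:S01|lborel. h t * (LINT x:{t..1}|lborel. g x))"
proof -
  define G where "G = (\<lambda>x. indicator S01 x *\<^sub>R g x)"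
  define H where "H = (\<lambda>x. indicator S01 x *\<^sub>R h x)"
  have [measurable]: "G \<in> borel_measurable lborel" "H \<in> borel_measurable lborel"
    using mg mh unfolding G_def H_def set_borel_measurable_def by auto
  have iG: "integrable lborel G" and iH: "integrable lborel H"
    using sg sh unfolding G_def H_def set_integrable_def by auto
  define ff where "ff = (\<lambda>x t. if t \<le> x then G x * H t else 0)"
  have mP: "(\<lambda>p. G (fst p) * H (snd p)) \<in> borel_measurable (lborel \<Otimes>\<^sub>M lborel)"
    by measurable
  have mf: "case_prod ff \<in> borel_measurable (lborel \<Otimes>\<^sub>M lborel)"
    unfolding ff_def by measurable
  have iP: "integrable (lborel \<Otimes>\<^sub>M lborel) (\<lambda>p. G (fst p) * H (snd p))"
  proof (rule lborel_pair.Fubini_integrable)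
    show "(\<lambda>p. G (fst p) * H (snd p)) \<in> borel_measurable (lborel \<Otimes>\<^sub>M lborel)" by (rule mP)
    have "(\<lambda>x. \<integral> y. norm (G (fst (x, y)) * H (snd (x, y))) \<partial>lborel) = (\<lambda>x. norm (G x) * (\<integral> y. norm (H y) \<partial>lborel))"
      by (simp add: norm_mult)
    moreover have "integrable lborel (\<lambda>x. norm (G x) * (\<integral> y. norm (H y) \<partial>lborel))"
      using iG by (intro integrable_mult_left integrable_norm)
    ultimately show "integrable lborel (\<lambda>x. \<integral> y. norm (G (fst (x, y)) * H (snd (x, y))) \<partial>lborel)" by simp
    show "AE x in lborel. integrable lborel (\<lambda>y. G (fst (x, y)) * H (snd (x, y)))"
      using iH by simp
  qed
  have iF: "integrable (lborel \<Otimes>\<^sub>M lborel) (case_prod ff)"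
    by (rule Bochner_Integration.integrable_bound[OF iP mf]) (auto simp: ff_def norm_mult)
  have fub: "(\<integral>t. (\<integral>x. ff x t \<partial>lborel) \<partial>lborel) = (\<integral>x. (\<integral>t. ff x t \<partial>lborel) \<partial>lborel)"
    by (rule lborel_pair.Fubini_integral[OF iF])
  have A1: "(\<integral>t. ff x t \<partial>lborel) = G x * (LINT t:{0..x}|lborel. h t)" for x
  proof (cases "x \<in> S01")
    case True
    have "(\<lambda>t. ff x t) = (\<lambda>t. G x * (indicator {0..x} t *\<^sub>R h t))"
      using True by (auto simp: ff_def H_def indicator_def fun_eq_iff)
    then show ?thesis by (simp only: integral_mult_right_zero set_lebesgue_integral_def)
  next
    case False then have G0: "G x = 0" by (simp add: G_def)
    then have "(\<lambda>t. ff x t) = (\<lambda>t. 0)" by (simp add: ff_def fun_eq_iff)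
    then show ?thesis using G0 by simp
  qed
  have B1: "(\<integral>x. ff x t \<partial>lborel) = H t * (LINT x:{t..1}|lborel. g x)" for t
  proof (cases "t \<in> S01")
    case True
    have "(\<lambda>x. ff x t) = (\<lambda>x. H t * (indicator {t..1} x *\<^sub>R g x))"
      using True by (auto simp: ff_def G_def indicator_def fun_eq_iff)
    then show ?thesis by (simp only: integral_mult_right_zero set_lebesgue_integral_def)
  next
    case False then have H0: "H t = 0" by (simp add: H_def)
    then have "(\<lambda>x. ff x t) = (\<lambda>x. 0)" by (simp add: ff_def fun_eq_iff)
    then show ?thesis using H0 by simp
  qed
  have L: "(LINT x:S01|lborel. g x * (LINT t:{0..x}|lborel. h t)) = (\<integral>x. G x * (LINT t:{0..x}|lborel. h t) \<partial>lborel)"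
    unfolding set_lebesgue_integral_def[of lborel S01] by (rule Bochner_Integration.integral_cong) (auto simp: G_def indicator_def)
  have R: "(LINT t:S01|lborel. h t * (LINT x:{t..1}|lborel. g x)) = (\<integral>t. H t * (LINT x:{t..1}|lborel. g x) \<partial>lborel)"
    unfolding set_lebesgue_integral_def[of lborel S01] by (rule Bochner_Integration.integral_cong) (auto simp: H_def indicator_def)
  show ?thesis unfolding L R using fub by (simp add: A1 B1)
qed


lemma Psi_eq:
  assumes U: "is_wderiv u g" and t: "t \<in> S01"
  shows "(LINT x:{t..1}|lborel. g x) = u 1 - u t"
proof -
  have sg: "set_integrable lborel S01 g" by (rule L2_si[OF wd_L2[OF U]])
  have st: "set_integrable lborel {t..1} g" by (rule set_integrable_subset[OF sg]) (use t in auto)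
  have gi: "g integrable_on S01" by (rule set_borel_integral_eq_integral(1)[OF sg])
  have c: "integral {0..t} g + integral {t..1} g = integral {0..1} g"
    by (rule Henstock_Kurzweil_Integration.integral_combine[OF _ _ gi]) (use t in auto)
  have "u t = u 0 + integral {0..t} g" by (rule wd_int[OF U t])
  moreover have "u 1 = u 0 + integral {0..1} g" by (rule wd_int[OF U]) simp
  ultimately show ?thesis unfolding set_borel_integral_eq_integral(2)[OF st] using c
    by (simp add: algebra_simps)
qed

lemma ibp:
  assumes U: "is_wderiv u g" and V: "is_wderiv v h"
  shows "(LINT x:S01|lborel. g x * v x) = u 1 * v 1 - u 0 * v 0 - (LINT x:S01|lborel. u x * h x)"
proof -
  have Lg: "L2 g" and Lh: "L2 h" and Lu: "L2 u" and Lv: "L2 v"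
    using wd_L2[OF U] wd_L2[OF V] wd_L2u[OF U] wd_L2u[OF V] .
  have sg: "set_integrable lborel S01 g" and sh: "set_integrable lborel S01 h"
    using L2_si[OF Lg] L2_si[OF Lh] .
  have mg: "set_borel_measurable lborel S01 g" and mh: "set_borel_measurable lborel S01 h"
    using Lg Lh by (simp_all add: L2_def)
  define Phi where "Phi x = (LINT t:{0..x}|lborel. h t)" for x
  have vPhi: "v x = v 0 + Phi x" if "x \<in> S01" for x
    using V that unfolding is_wderiv_def Phi_def by blast
  have fub: "(LINT x:S01|lborel. g x * Phi x) = (LINT t:S01|lborel. h t * (LINT x:{t..1}|lborel. g x))"
    unfolding Phi_def by (rule fubini_tri[OF sg sh mg mh])
  have sgv: "set_integrable lborel S01 (\<lambda>x. g x * v x)" by (rule L2_mult[OF Lg Lv])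
  have sv0g: "set_integrable lborel S01 (\<lambda>x. v 0 * g x)" using sg by simp
  have sgP: "set_integrable lborel S01 (\<lambda>x. g x * Phi x)"
  proof -
    have "set_integrable lborel S01 (\<lambda>x. g x * v x - v 0 * g x)" by (rule set_integral_diff(1)[OF sgv sv0g])
    moreover have "set_integrable lborel S01 (\<lambda>x. g x * v x - v 0 * g x) = set_integrable lborel S01 (\<lambda>x. g x * Phi x)"
    proof (rule set_integrable_cong)
      fix x assume "x \<in> S01" then have "v x = v 0 + Phi x" by (rule vPhi)
      then show "g x * v x - v 0 * g x = g x * Phi x" by (simp add: algebra_simps)
    qed auto
    ultimately show ?thesis by simp
  qed
  have Ig: "(LINT x:S01|lborel. g x) = u 1 - u 0"
    using U unfolding is_wderiv_def by (metis add_diff_cancel_left' atLeastAtMost_iff order_refl zero_le_one)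
  have Ih: "(LINT x:S01|lborel. h x) = v 1 - v 0"
    using V unfolding is_wderiv_def by (metis add_diff_cancel_left' atLeastAtMost_iff order_refl zero_le_one)
  have "(LINT x:S01|lborel. g x * v x) = (LINT x:S01|lborel. v 0 * g x + g x * Phi x)"
  proof (rule set_lebesgue_integral_cong)
    show "\<forall>x. x \<in> S01 \<longrightarrow> g x * v x = v 0 * g x + g x * Phi x"
    proof (intro allI impI)
      fix x assume "x \<in> S01" then have "v x = v 0 + Phi x" by (rule vPhi)
      then show "g x * v x = v 0 * g x + g x * Phi x" by (simp add: algebra_simps)
    qed
  qed auto
  also have "\<dots> = (LINT x:S01|lborel. v 0 * g x) + (LINT x:S01|lborel. g x * Phi x)"
    by (rule set_integral_add(2)[OF sv0g sgP])
  also have "\<dots> = v 0 * (u 1 - u 0) + (LINT x:S01|lborel. g x * Phi x)"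
    using Ig by simp
  finally have E1: "(LINT x:S01|lborel. g x * v x) = v 0 * (u 1 - u 0) + (LINT x:S01|lborel. g x * Phi x)" .
  have suh: "set_integrable lborel S01 (\<lambda>x. u x * h x)" by (rule L2_mult[OF Lu Lh])
  have su1h: "set_integrable lborel S01 (\<lambda>x. u 1 * h x)" using sh by simp
  have "(LINT t:S01|lborel. h t * (LINT x:{t..1}|lborel. g x)) = (LINT t:S01|lborel. u 1 * h t - u t * h t)"
    by (rule set_lebesgue_integral_cong) (auto simp: Psi_eq[OF U] algebra_simps)
  also have "\<dots> = (LINT t:S01|lborel. u 1 * h t) - (LINT t:S01|lborel. u t * h t)"
    by (rule set_integral_diff(2)[OF su1h suh])
  also have "\<dots> = u 1 * (v 1 - v 0) - (LINT t:S01|lborel. u t * h t)"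
    using Ih by simp
  finally have E2: "(LINT t:S01|lborel. h t * (LINT x:{t..1}|lborel. g x)) = u 1 * (v 1 - v 0) - (LINT t:S01|lborel. u t * h t)" .
  have "(LINT x:S01|lborel. g x * v x) = v 0 * (u 1 - u 0) + (u 1 * (v 1 - v 0) - (LINT t:S01|lborel. u t * h t))"
    using E1 E2 fub by simp
  then show ?thesis by (simp add: algebra_simps)
qed


lemma amgm_t: "(t::real) > 0 \<Longrightarrow> a * b \<le> (t*a^2 + b^2/t)/2"
proof -
  assume t: "t > 0"
  have "0 \<le> (t*a - b)^2 / t" using t by simp
  also have "(t*a - b)^2 / t = t*a^2 - 2*a*b + b^2/t" using t
    by (simp add: power2_eq_square field_simps)
  finally show ?thesis by simp
qed

lemma amgm_opt:
  fixes A B X :: real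
  assumes A: "0 \<le> A" and B: "0 \<le> B" and H: "\<And>t. t > 0 \<Longrightarrow> X \<le> (t*A + B/t)/2"
  shows "X \<le> sqrt A * sqrt B"
proof (cases "A > 0 \<and> B > 0")
  case True
  define a where "a = sqrt A"
  define b where "b = sqrt B"
  have a: "a > 0" "A = a^2" using True by (auto simp: a_def)
  have b: "b > 0" "B = b^2" using True by (auto simp: b_def)
  define t where "t = b / a"
  have t: "t > 0" using a b by (simp add: t_def)
  have "t*A = a * b" using a b unfolding t_def by (simp add: power2_eq_square field_simps)
  moreover have "B/t = a * b" using a b unfolding t_def by (simp add: power2_eq_square field_simps)
  ultimately show ?thesis using H[OF t] by (simp add: a_def b_def)
next
  case False
  then have "A = 0 \<or> B = 0" using A B by auto
  then have z: "sqrt A * sqrt B = 0" by auto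
  show ?thesis
  proof (rule ccontr)
    assume "\<not> X \<le> sqrt A * sqrt B"
    then have X: "X > 0" using z by simp
    show False
    proof (cases "A = 0")
      case True
      define t where "t = (B+1)/X"
      have t: "t > 0" using X B by (simp add: t_def)
      have "B/t = B * X/(B+1)" using X B by (simp add: t_def)
      also have "\<dots> < X" using X B by (simp add: field_simps)
      finally show False using H[OF t] True X by simp
    next
      case False
      then have B0: "B = 0" using \<open>A = 0 \<or> B = 0\<close> by simp
      define t where "t = X/(A+1)"
      have t: "t > 0" using X A by (simp add: t_def)
      have "t*A = X * A/(A+1)" by (simp add: t_def)
      also have "\<dots> < 2*X"
      proof -
        have "0 \<le> X*A" using A X by simp
        then have "X*A < 2*X*(A+1)" using X by (simp add: algebra_simps)
        then show ?thesis using A by (simp add: field_simps)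
      qed
      finally show False using H[OF t] B0 by simp
    qed
  qed
qed

lemma si_nonneg:
  assumes "set_integrable lborel S01 (f::real\<Rightarrow>real)" "\<And>x. x\<in>S01 \<Longrightarrow> 0 \<le> f x"
  shows "0 \<le> (LINT x:S01|lborel. f x)"
  using set_integral_mono[OF si_const assms(1), of 0] assms(2) by simp

lemma CS:
  assumes Lf: "L2 f" and Lg: "L2 g"
  shows "cmod (LINT x:S01|lborel. f x * g x) \<le> sqrt (LINT x:S01|lborel. (cmod (f x))^2) * sqrt (LINT x:S01|lborel. (cmod (g x))^2)"
proof -
  define A where "A = (LINT x:S01|lborel. (cmod (f x))^2)"
  define B where "B = (LINT x:S01|lborel. (cmod (g x))^2)"
  have sA: "set_integrable lborel S01 (\<lambda>x. (cmod (f x))^2)" and sB: "set_integrable lborel S01 (\<lambda>x. (cmod (g x))^2)"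
    using Lf Lg by (simp_all add: L2_def)
  have A0: "0 \<le> A" unfolding A_def by (rule si_nonneg[OF sA]) simp
  have B0: "0 \<le> B" unfolding B_def by (rule si_nonneg[OF sB]) simp
  have sfg: "set_integrable lborel S01 (\<lambda>x. f x * g x)" by (rule L2_mult[OF Lf Lg])
  have sn: "set_integrable lborel S01 (\<lambda>x. cmod (f x * g x))" by (rule set_integrable_norm[OF sfg])
  have n1: "cmod (LINT x:S01|lborel. f x * g x) \<le> (LINT x:S01|lborel. cmod (f x * g x))"
    by (rule set_integral_norm_bound[OF sfg])
  have "(LINT x:S01|lborel. cmod (f x * g x)) \<le> sqrt A * sqrt B"
  proof (rule amgm_opt[OF A0 B0])
    fix t::real assume t: "t > 0"
    have s1: "set_integrable lborel S01 (\<lambda>x. (t/2) * (cmod (f x))^2)" using sA by simp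
    have s2: "set_integrable lborel S01 (\<lambda>x. (1/(2*t)) * (cmod (g x))^2)" using sB by simp
    have s12: "set_integrable lborel S01 (\<lambda>x. (t/2) * (cmod (f x))^2 + (1/(2*t)) * (cmod (g x))^2)"
      by (rule set_integral_add(1)[OF s1 s2])
    have "(LINT x:S01|lborel. cmod (f x * g x)) \<le> (LINT x:S01|lborel. (t/2) * (cmod (f x))^2 + (1/(2*t)) * (cmod (g x))^2)"
    proof (rule set_integral_mono[OF sn s12])
      fix x
      have "cmod (f x) * cmod (g x) \<le> (t * (cmod (f x))^2 + (cmod (g x))^2/t)/2" by (rule amgm_t[OF t])
      then show "cmod (f x * g x) \<le> (t/2) * (cmod (f x))^2 + (1/(2*t)) * (cmod (g x))^2"
        by (simp add: norm_mult field_simps)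
    qed
    also have "\<dots> = (LINT x:S01|lborel. (t/2) * (cmod (f x))^2) + (LINT x:S01|lborel. (1/(2*t)) * (cmod (g x))^2)"
      by (rule set_integral_add(2)[OF s1 s2])
    also have "\<dots> = (t/2) * A + (1/(2*t)) * B" by (simp add: A_def B_def)
    also have "\<dots> = (t*A + B/t)/2" by (simp add: field_simps)
    finally show "(LINT x:S01|lborel. cmod (f x * g x)) \<le> (t*A + B/t)/2" .
  qed
  then show ?thesis using n1 unfolding A_def B_def by linarith
qed


lemma LINT_const01: "x \<in> S01 \<Longrightarrow> (LINT t:{0..x}|lborel. (c::complex)) = of_real x * c"
  by (subst set_integral_const) (auto simp: scaleR_conv_of_real)

lemma wd_lin1: "is_wderiv (\<lambda>x. complex_of_real x - 1) (\<lambda>_. 1)"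
  unfolding is_wderiv_def
proof (intro conjI ballI)
  show "L2 (\<lambda>_. 1)" by (rule cont_L2) simp
  fix x assume "x \<in> S01"
  then show "complex_of_real x - 1 = (complex_of_real 0 - 1) + (LINT t:{0..x}|lborel. 1)"
    by (simp add: LINT_const01)
qed

definition N0 :: "fn \<Rightarrow> real" where "N0 v = (LINT x:S01|lborel. (cmod (v x))^2)"
definition N1 :: "fn \<Rightarrow> real" where "N1 v = (LINT x:S01|lborel. (cmod (wd v x))^2)"

lemma N0_nonneg: "L2 v \<Longrightarrow> 0 \<le> N0 v"
  unfolding N0_def by (rule si_nonneg) (auto simp: L2_def)

lemma H1norm_eq:
  assumes "v \<in> H1" shows "H1norm v = sqrt (N0 v + N1 v)" "0 \<le> N0 v" "0 \<le> N1 v"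
proof -
  have L: "L2 v" "L2 (wd v)" using H1_L2[OF assms] wd_L2[OF wd_wd[OF assms]] .
  show "H1norm v = sqrt (N0 v + N1 v)" unfolding H1norm_def N0_def N1_def
    using L by (subst set_integral_add(2)) (auto simp: L2_def)
  show "0 \<le> N0 v" by (rule N0_nonneg[OF L(1)])
  show "0 \<le> N1 v" unfolding N1_def by (rule si_nonneg) (use L(2) in \<open>auto simp: L2_def\<close>)
qed

lemma N0_le: "v \<in> H1 \<Longrightarrow> sqrt (N0 v) \<le> H1norm v"
  using H1norm_eq[of v] by simp

lemma N1_le: "v \<in> H1 \<Longrightarrow> sqrt (N1 v) \<le> H1norm v"
  using H1norm_eq[of v] by simp

lemma H1norm_nonneg: "v \<in> H1 \<Longrightarrow> 0 \<le> H1norm v"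
  using H1norm_eq[of v] by simp

lemma I_bound:
  assumes "L2 f" "v \<in> H1"
  shows "cmod (LINT x:S01|lborel. f x * v x) \<le> sqrt (N0 f) * H1norm v"
proof -
  have "cmod (LINT x:S01|lborel. f x * v x) \<le> sqrt (N0 f) * sqrt (N0 v)"
    using CS[OF assms(1) H1_L2[OF assms(2)]] by (simp add: N0_def)
  also have "\<dots> \<le> sqrt (N0 f) * H1norm v"
    by (rule mult_left_mono[OF N0_le[OF assms(2)]]) (simp add: N0_nonneg[OF assms(1)])
  finally show ?thesis .
qed

lemma I'_bound:
  assumes "L2 f" "v \<in> H1"
  shows "cmod (LINT x:S01|lborel. f x * wd v x) \<le> sqrt (N0 f) * H1norm v"
proof -
  have "cmod (LINT x:S01|lborel. f x * wd v x) \<le> sqrt (N0 f) * sqrt (N1 v)"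
    using CS[OF assms(1) wd_L2[OF wd_wd[OF assms(2)]]] by (simp add: N0_def N1_def)
  also have "\<dots> \<le> sqrt (N0 f) * H1norm v"
    by (rule mult_left_mono[OF N1_le[OF assms(2)]]) (simp add: N0_nonneg[OF assms(1)])
  finally show ?thesis .
qed

lemma N0_lin1: "N0 (\<lambda>x. complex_of_real x - 1) \<le> 1"
proof -
  have s: "set_integrable lborel S01 (\<lambda>x. (cmod (complex_of_real x - 1))^2)"
    using wd_L2u[OF wd_lin1] by (simp add: L2_def)
  have "N0 (\<lambda>x. complex_of_real x - 1) \<le> (LINT x:S01|lborel. (1::real))"
    unfolding N0_def
  proof (rule set_integral_mono[OF s si_const])
    fix x :: real assume x: "x \<in> S01"
    have "cmod (complex_of_real x - 1) = 1 - x" using x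
      by (metis abs_of_nonneg atLeastAtMost_iff diff_ge_0_iff_ge norm_minus_commute norm_of_real of_real_1 of_real_diff)
    then show "(cmod (complex_of_real x - 1))^2 \<le> 1" using x by (simp add: power_le_one)
  qed
  also have "\<dots> = 1" by (subst set_integral_const) auto
  finally show ?thesis .
qed

lemma N0_one: "N0 (\<lambda>_. 1) = 1"
  unfolding N0_def by (subst set_integral_const) auto

lemma v0_bound:
  assumes v: "v \<in> H1"
  shows "cmod (v 0) \<le> 2 * H1norm v"
proof -
  have V: "is_wderiv v (wd v)" by (rule wd_wd[OF v])
  have e: "(LINT x:S01|lborel. 1 * v x) = v 0 - (LINT x:S01|lborel. (complex_of_real x - 1) * wd v x)"
    using ibp[OF wd_lin1 V] by simp
  have "cmod (v 0) = cmod ((LINT x:S01|lborel. 1 * v x) + (LINT x:S01|lborel. (complex_of_real x - 1) * wd v x))"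
    using e by (simp add: algebra_simps)
  also have "\<dots> \<le> cmod (LINT x:S01|lborel. 1 * v x) + cmod (LINT x:S01|lborel. (complex_of_real x - 1) * wd v x)"
    by (rule norm_triangle_ineq)
  also have "\<dots> \<le> sqrt (N0 (\<lambda>_. 1)) * H1norm v + sqrt (N0 (\<lambda>x. complex_of_real x - 1)) * H1norm v"
    by (intro add_mono I_bound I'_bound v wd_L2u[OF wd_lin1] cont_L2) simp
  also have "\<dots> \<le> 1 * H1norm v + 1 * H1norm v"
    using N0_lin1 H1norm_nonneg[OF v] by (intro add_mono mult_right_mono) (auto simp: N0_one)
  finally show ?thesis by simp
qed


definition pp :: "nat \<Rightarrow> fn" where "pp k x = complex_of_real ((1 - x)^k)"

lemma pp_cont: "continuous_on S01 (pp k)"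
  unfolding pp_def by (intro continuous_intros)

lemma pp_L2: "L2 (pp k)" by (rule cont_L2[OF pp_cont])

lemma pp_wd: "is_wderiv (pp k) (\<lambda>x. - complex_of_real (real k * (1 - x)^(k - 1)))"
  unfolding is_wderiv_def
proof (intro conjI ballI)
  show "L2 (\<lambda>x. - complex_of_real (real k * (1 - x)^(k - 1)))"
    by (rule cont_L2) (intro continuous_intros)
  fix x :: real assume x: "x \<in> S01"
  have D: "((\<lambda>x. (1 - x)^k) has_vector_derivative (- (real k * (1 - t)^(k - 1)))) (at t within {0..x})" for t
  proof -
    have "((\<lambda>x. (1 - x)^k) has_real_derivative (real k * (1 - t)^(k - 1) * (0 - 1))) (at t within {0..x})"
      by (intro derivative_eq_intros) auto
    then show ?thesis by (simp add: has_real_derivative_iff_has_vector_derivative)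
  qed
  have "(LINT t:{0..x}|lborel. - (real k * (1 - t)^(k - 1))) = (1 - x)^k - (1 - 0)^k"
    unfolding set_lebesgue_integral_def
    by (rule integral_FTC_atLeastAtMost[OF _ D]) (use x in \<open>auto intro!: continuous_intros\<close>)
  then have "(LINT t:{0..x}|lborel. - complex_of_real (real k * (1 - t)^(k - 1))) = complex_of_real ((1 - x)^k - 1)"
    using set_integral_complex_of_real[of lborel "{0..x}" "\<lambda>t. - (real k * (1 - t)^(k - 1))"] by simp
  then show "pp k x = pp k 0 + (LINT t:{0..x}|lborel. - complex_of_real (real k * (1 - t)^(k - 1)))"
    by (simp add: pp_def)
qed

lemma pp_H1: "pp k \<in> H1" using pp_wd unfolding H1_def by blast

lemma wd_sub_const: assumes "is_wderiv v g" shows "is_wderiv (\<lambda>x. v x - c) g"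
  unfolding is_wderiv_def
proof (intro conjI ballI)
  show "L2 g" by (rule wd_L2[OF assms])
  fix x assume x: "x \<in> S01"
  have "v x = v 0 + (LINT t:{0..x}|lborel. g t)" using assms x unfolding is_wderiv_def by blast
  then show "v x - c = (v 0 - c) + (LINT t:{0..x}|lborel. g t)" by simp
qed

lemma gU_alt: "gU n u \<phi> = (LINT x:S01|lborel. wd u x * wd \<phi> x) + gamma n u * (LINT x:S01|lborel. pp (n-2) x * \<phi> x)"
  unfolding gU_def pp_def ..

lemma gU_eq:
  assumes u: "u \<in> H1" "is_wderiv u u1" and ph: "\<phi> \<in> H1" "is_wderiv \<phi> \<phi>1"
  shows "gU n u \<phi> = (LINT x:S01|lborel. u1 x * \<phi>1 x) + gamma n u * (LINT x:S01|lborel. pp (n-2) x * \<phi> x)"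
proof -
  have a1: "AE x in lborel. x \<in> S01 \<longrightarrow> wd u x = u1 x" by (rule wd_ae[OF wd_wd[OF u(1)] u(2)])
  have a2: "AE x in lborel. x \<in> S01 \<longrightarrow> wd \<phi> x = \<phi>1 x" by (rule wd_ae[OF wd_wd[OF ph(1)] ph(2)])
  have "(LINT x:S01|lborel. wd u x * wd \<phi> x) = (LINT x:S01|lborel. u1 x * \<phi>1 x)"
  proof (rule LINT_congAE)
    show "set_integrable lborel S01 (\<lambda>x. wd u x * wd \<phi> x)"
      by (rule L2_mult[OF wd_L2[OF wd_wd[OF u(1)]] wd_L2[OF wd_wd[OF ph(1)]]])
    show "set_integrable lborel S01 (\<lambda>x. u1 x * \<phi>1 x)"
      by (rule L2_mult[OF wd_L2[OF u(2)] wd_L2[OF ph(2)]])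
    show "AE x in lborel. x \<in> S01 \<longrightarrow> wd u x * wd \<phi> x = u1 x * \<phi>1 x"
      using a1 a2 by eventually_elim auto
  qed simp
  then show ?thesis unfolding gU_alt by simp
qed


lemma H1_lin: "\<phi> \<in> H1 \<Longrightarrow> \<psi> \<in> H1 \<Longrightarrow> (\<lambda>x. a * \<phi> x + b * \<psi> x) \<in> H1"
  unfolding H1_def using wd_lin by blast

lemma H1_sub_const: "v \<in> H1 \<Longrightarrow> (\<lambda>x. v x - c) \<in> H1"
  unfolding H1_def using wd_sub_const by blast

lemma LINT_lin2:
  fixes f g :: "real \<Rightarrow> complex"
  assumes "set_integrable lborel S01 f" "set_integrable lborel S01 g"
  shows "(LINT x:S01|lborel. a * f x + b * g x) = a * (LINT x:S01|lborel. f x) + b * (LINT x:S01|lborel. g x)"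
proof -
  have "(LINT x:S01|lborel. a * f x + b * g x) = (LINT x:S01|lborel. a * f x) + (LINT x:S01|lborel. b * g x)"
    by (rule set_integral_add(2)) (use assms in auto)
  then show ?thesis by simp
qed

lemma gU_lin:
  assumes u: "u \<in> H1" and ph: "\<phi> \<in> H1" and ps: "\<psi> \<in> H1"
  shows "gU n u (\<lambda>x. a * \<phi> x + b * \<psi> x) = a * gU n u \<phi> + b * gU n u \<psi>"
proof -
  have U: "is_wderiv u (wd u)" and F: "is_wderiv \<phi> (wd \<phi>)" and G: "is_wderiv \<psi> (wd \<psi>)"
    using wd_wd[OF u] wd_wd[OF ph] wd_wd[OF ps] .
  have FG: "is_wderiv (\<lambda>x. a * \<phi> x + b * \<psi> x) (\<lambda>x. a * wd \<phi> x + b * wd \<psi> x)"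
    by (rule wd_lin[OF F G])
  have e1: "gU n u (\<lambda>x. a * \<phi> x + b * \<psi> x) = (LINT x:S01|lborel. wd u x * (a * wd \<phi> x + b * wd \<psi> x))
     + gamma n u * (LINT x:S01|lborel. pp (n-2) x * (a * \<phi> x + b * \<psi> x))"
    by (rule gU_eq[OF u U H1_lin[OF ph ps] FG])
  have e2: "gU n u \<phi> = (LINT x:S01|lborel. wd u x * wd \<phi> x) + gamma n u * (LINT x:S01|lborel. pp (n-2) x * \<phi> x)"
    by (rule gU_eq[OF u U ph F])
  have e3: "gU n u \<psi> = (LINT x:S01|lborel. wd u x * wd \<psi> x) + gamma n u * (LINT x:S01|lborel. pp (n-2) x * \<psi> x)"
    by (rule gU_eq[OF u U ps G])
  have i1: "(LINT x:S01|lborel. wd u x * (a * wd \<phi> x + b * wd \<psi> x)) = a * (LINT x:S01|lborel. wd u x * wd \<phi> x) + b * (LINT x:S01|lborel. wd u x * wd \<psi> x)"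
  proof -
    have "(\<lambda>x. wd u x * (a * wd \<phi> x + b * wd \<psi> x)) = (\<lambda>x. a * (wd u x * wd \<phi> x) + b * (wd u x * wd \<psi> x))"
      by (simp add: fun_eq_iff algebra_simps)
    then show ?thesis using LINT_lin2[OF L2_mult[OF wd_L2[OF U] wd_L2[OF F]] L2_mult[OF wd_L2[OF U] wd_L2[OF G]], where a=a and b=b]
      by simp
  qed
  have i2: "(LINT x:S01|lborel. pp (n-2) x * (a * \<phi> x + b * \<psi> x)) = a * (LINT x:S01|lborel. pp (n-2) x * \<phi> x) + b * (LINT x:S01|lborel. pp (n-2) x * \<psi> x)"
  proof -
    have "(\<lambda>x. pp (n-2) x * (a * \<phi> x + b * \<psi> x)) = (\<lambda>x. a * (pp (n-2) x * \<phi> x) + b * (pp (n-2) x * \<psi> x))"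
      by (simp add: fun_eq_iff algebra_simps)
    then show ?thesis using LINT_lin2[OF L2_mult[OF pp_L2 H1_L2[OF ph]] L2_mult[OF pp_L2 H1_L2[OF ps]], where a=a and b=b]
      by simp
  qed
  show ?thesis unfolding e1 e2 e3 i1 i2 by (simp add: algebra_simps)
qed

definition WW :: "nat \<Rightarrow> fn \<Rightarrow> functional" where
  "WW n u v = (if v \<in> H1T then gU n u (\<lambda>x. v x - v 0) else 0)"

lemma gU_shift:
  assumes u: "u \<in> H1" and v: "v \<in> H1"
  shows "gU n u (\<lambda>x. v x - v 0) = (LINT x:S01|lborel. wd u x * wd v x)
     + gamma n u * ((LINT x:S01|lborel. pp (n-2) x * v x) - v 0 * (LINT x:S01|lborel. pp (n-2) x))"
proof -
  have e: "gU n u (\<lambda>x. v x - v 0) = (LINT x:S01|lborel. wd u x * wd v x)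
     + gamma n u * (LINT x:S01|lborel. pp (n-2) x * (v x - v 0))"
    by (rule gU_eq[OF u wd_wd[OF u] H1_sub_const[OF v] wd_sub_const[OF wd_wd[OF v]]])
  have "(LINT x:S01|lborel. pp (n-2) x * (v x - v 0)) = (LINT x:S01|lborel. 1 * (pp (n-2) x * v x) + (- v 0) * pp (n-2) x)"
    by (simp add: algebra_simps)
  also have "\<dots> = (LINT x:S01|lborel. pp (n-2) x * v x) - v 0 * (LINT x:S01|lborel. pp (n-2) x)"
    by (subst LINT_lin2[OF L2_mult[OF pp_L2 H1_L2[OF v]] L2_si[OF pp_L2]]) simp
  finally show ?thesis unfolding e by simp
qed

lemma WW_Hm1T:
  assumes u: "u \<in> H1"
  shows "WW n u \<in> Hm1T"
  unfolding Hm1T_def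
proof (intro CollectI conjI allI impI ballI)
  fix v assume "v \<notin> H1T" then show "WW n u v = 0" by (simp add: WW_def)
next
  fix v w a b assume v: "v \<in> H1T" and w: "w \<in> H1T"
  have vH: "v \<in> H1" and wH: "w \<in> H1" using v w by (auto simp: H1T_def)
  have vw: "(\<lambda>x. a * v x + b * w x) \<in> H1T"
    using v w H1_lin[OF vH wH] by (auto simp: H1T_def)
  have "(\<lambda>x. a * v x + b * w x - (a * v 0 + b * w 0)) = (\<lambda>x. a * (v x - v 0) + b * (w x - w 0))"
    by (simp add: fun_eq_iff algebra_simps)
  then show "WW n u (\<lambda>x. a * v x + b * w x) = a * WW n u v + b * WW n u w"
    using v w vw gU_lin[OF u H1_sub_const[OF vH] H1_sub_const[OF wH], where n=n and a=a and b=b]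
    by (simp add: WW_def)
next
  define C where "C = sqrt (N0 (wd u)) + cmod (gamma n u) * (sqrt (N0 (pp (n-2))) + 2 * cmod (LINT x:S01|lborel. pp (n-2) x))"
  show "\<exists>C. \<forall>v\<in>H1T. cmod (WW n u v) \<le> C * H1norm v"
  proof (intro exI ballI)
    fix v assume v: "v \<in> H1T"
    have vH: "v \<in> H1" using v by (simp add: H1T_def)
    have Hn: "0 \<le> H1norm v" by (rule H1norm_nonneg[OF vH])
    have b1: "cmod (LINT x:S01|lborel. wd u x * wd v x) \<le> sqrt (N0 (wd u)) * H1norm v"
      by (rule I'_bound[OF wd_L2[OF wd_wd[OF u]] vH])
    have b2: "cmod (LINT x:S01|lborel. pp (n-2) x * v x) \<le> sqrt (N0 (pp (n-2))) * H1norm v"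
      by (rule I_bound[OF pp_L2 vH])
    have b3: "cmod (v 0 * (LINT x:S01|lborel. pp (n-2) x)) \<le> 2 * H1norm v * cmod (LINT x:S01|lborel. pp (n-2) x)"
      unfolding norm_mult by (rule mult_right_mono[OF v0_bound[OF vH]]) simp
    define A where "A = (LINT x:S01|lborel. wd u x * wd v x)"
    define B where "B = (LINT x:S01|lborel. pp (n-2) x * v x)"
    define D where "D = v 0 * (LINT x:S01|lborel. pp (n-2) x)"
    have "WW n u v = A + gamma n u * (B - D)"
      using v unfolding A_def B_def D_def WW_def by (simp add: gU_shift[OF u vH])
    then have "cmod (WW n u v) = cmod (A + gamma n u * (B - D))" by simp
    also have "\<dots> \<le> cmod A + cmod (gamma n u * (B - D))" by (rule norm_triangle_ineq)
    also have "\<dots> = cmod A + cmod (gamma n u) * cmod (B - D)" by (simp add: norm_mult)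
    also have "\<dots> \<le> cmod A + cmod (gamma n u) * (cmod B + cmod D)"
      by (intro add_left_mono mult_left_mono norm_triangle_ineq4) simp
    also have "\<dots> \<le> sqrt (N0 (wd u)) * H1norm v + cmod (gamma n u) * (sqrt (N0 (pp (n-2))) * H1norm v + 2 * H1norm v * cmod (LINT x:S01|lborel. pp (n-2) x))"
      unfolding A_def B_def D_def by (intro add_mono b1 mult_left_mono b2 b3) simp_all
    also have "\<dots> = C * H1norm v" by (simp add: C_def algebra_simps)
    finally show "cmod (WW n u v) \<le> C * H1norm v" .
  qed
qed


lemma const_H1: "(\<lambda>_. c) \<in> H1" unfolding H1_def using wd_const by blast
lemma const_H1T: "(\<lambda>_. c) \<in> H1T" unfolding H1T_def using const_H1 by simp

lemma gU_zero: "u \<in> H1 \<Longrightarrow> gU n u (\<lambda>_. 0) = 0"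
  using gU_eq[OF _ wd_wd const_H1 wd_const, of u n 0] by simp

lemma Idm_val:
  assumes u: "u \<in> H1"
  shows "Idm_inv (gU n u) = WW n u"
  unfolding Idm_inv_def
proof (rule the_equality)
  show "WW n u \<in> Hm1T \<and> mu0H (WW n u) = 0 \<and> (\<forall>\<phi>\<in>H10. WW n u \<phi> = gU n u \<phi>)"
  proof (intro conjI ballI)
    show "WW n u \<in> Hm1T" by (rule WW_Hm1T[OF u])
    show "mu0H (WW n u) = 0" using const_H1T[of 1] gU_zero[OF u, of n] by (simp add: mu0H_def WW_def)
    fix \<phi> assume ph: "\<phi> \<in> H10"
    then have "\<phi> \<in> H1T" "\<phi> 0 = 0" by (auto simp: H10_def H1T_def)
    then show "WW n u \<phi> = gU n u \<phi>" by (simp add: WW_def)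
  qed
next
  fix w assume w: "w \<in> Hm1T \<and> mu0H w = 0 \<and> (\<forall>\<phi>\<in>H10. w \<phi> = gU n u \<phi>)"
  show "w = WW n u"
  proof
    fix v
    show "w v = WW n u v"
    proof (cases "v \<in> H1T")
      case True
      have vH: "v \<in> H1" and v01: "v 0 = v 1" using True by (auto simp: H1T_def)
      define \<phi> where "\<phi> = (\<lambda>x. v x - v 0)"
      have phH: "\<phi> \<in> H1" unfolding \<phi>_def by (rule H1_sub_const[OF vH])
      have ph0: "\<phi> \<in> H10" using phH v01 by (simp add: H10_def \<phi>_def)
      have ph1: "\<phi> \<in> H1T" using phH v01 by (simp add: H1T_def \<phi>_def)
      have L: "\<forall>v\<in>H1T. \<forall>w'\<in>H1T. \<forall>a b. w (\<lambda>x. a * v x + b * w' x) = a * w v + b * w w'"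
        using w by (simp add: Hm1T_def)
      have lin: "w (\<lambda>x. 1 * \<phi> x + v 0 * 1) = 1 * w \<phi> + v 0 * w (\<lambda>_. 1)"
        using L[rule_format, OF ph1 const_H1T[of 1], of 1 "v 0"] by simp
      have fe: "(\<lambda>x. 1 * \<phi> x + v 0 * 1) = v" by (simp add: \<phi>_def fun_eq_iff)
      have "w v = w \<phi>" using lin w unfolding fe by (simp add: mu0H_def)
      also have "\<dots> = gU n u \<phi>" using w ph0 by blast
      also have "\<dots> = WW n u v" using True by (simp add: WW_def \<phi>_def)
      finally show ?thesis .
    next
      case False
      then show ?thesis using w by (simp add: Hm1T_def WW_def)
    qed
  qed
qed

lemma KEY:
  assumes u1: "is_wderiv u u1" and u2: "is_wderiv u1 u2" and v: "v \<in> H1T"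
  shows "A_Y n y u v = (LINT x:S01|lborel. (- u2 x + gamma n u * pp (n-2) x) * v x)
           - ((LINT x:S01|lborel. - u2 x + gamma n u * pp (n-2) x) + cY y u) * v 1"
proof -
  have uH: "u \<in> H1" using u1 unfolding H1_def by blast
  have vH: "v \<in> H1" and v01: "v 0 = v 1" using v by (auto simp: H1T_def)
  define \<phi> where "\<phi> = (\<lambda>x. v x - v 0)"
  define f where "f = (\<lambda>x. - u2 x + gamma n u * pp (n-2) x)"
  have phH: "\<phi> \<in> H1" unfolding \<phi>_def by (rule H1_sub_const[OF vH])
  have PH: "is_wderiv \<phi> (wd v)" unfolding \<phi>_def by (rule wd_sub_const[OF wd_wd[OF vH]])
  have Lf: "L2 f"
  proof -
    have "L2 (\<lambda>x. (-1) * u2 x + gamma n u * pp (n-2) x)" by (rule L2_lin[OF wd_L2[OF u2] pp_L2])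
    then show ?thesis by (simp add: f_def)
  qed
  have Lph: "L2 \<phi>" by (rule H1_L2[OF phH])
  have AY: "A_Y n y u v = gU n u \<phi> - cY y u * v 1"
    using v by (simp add: A_Y_def Idm_val[OF uH] WW_def delta1_def \<phi>_def)
  have g: "gU n u \<phi> = (LINT x:S01|lborel. u1 x * wd v x) + gamma n u * (LINT x:S01|lborel. pp (n-2) x * \<phi> x)"
    by (rule gU_eq[OF uH u1 phH PH])
  have ib: "(LINT x:S01|lborel. u2 x * \<phi> x) = u1 1 * \<phi> 1 - u1 0 * \<phi> 0 - (LINT x:S01|lborel. u1 x * wd v x)"
    by (rule ibp[OF u2 PH])
  have ph01: "\<phi> 0 = 0" "\<phi> 1 = 0" using v01 by (auto simp: \<phi>_def)
  have "gU n u \<phi> = (LINT x:S01|lborel. (-1) * (u2 x * \<phi> x) + gamma n u * (pp (n-2) x * \<phi> x))"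
    using g ib ph01 LINT_lin2[OF L2_mult[OF wd_L2[OF u2] Lph] L2_mult[OF pp_L2 Lph], where a="-1" and b="gamma n u"]
    by simp
  also have "\<dots> = (LINT x:S01|lborel. f x * \<phi> x)"
    by (rule set_lebesgue_integral_cong) (auto simp: f_def algebra_simps)
  also have "\<dots> = (LINT x:S01|lborel. 1 * (f x * v x) + (- v 0) * f x)"
    by (rule set_lebesgue_integral_cong) (auto simp: \<phi>_def algebra_simps)
  also have "\<dots> = (LINT x:S01|lborel. f x * v x) - v 0 * (LINT x:S01|lborel. f x)"
    using LINT_lin2[OF L2_mult[OF Lf H1_L2[OF vH]] L2_si[OF Lf], where a=1 and b="- v 0"] by simp
  finally have "gU n u \<phi> = (LINT x:S01|lborel. f x * v x) - v 0 * (LINT x:S01|lborel. f x)" .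
  then have "A_Y n y u v = (LINT x:S01|lborel. f x * v x) - ((LINT x:S01|lborel. f x) + cY y u) * v 1"
    unfolding AY using v01 by (simp add: algebra_simps)
  then show ?thesis by (simp add: f_def)
qed


lemma wd_cong_S01:
  assumes "is_wderiv f g" "\<And>x. x \<in> S01 \<Longrightarrow> f x = f' x"
  shows "is_wderiv f' g"
  unfolding is_wderiv_def
proof (intro conjI ballI)
  show "L2 g" by (rule wd_L2[OF assms(1)])
  fix x assume x: "x \<in> S01"
  have "f x = f 0 + (LINT t:{0..x}|lborel. g t)" using assms(1) x unfolding is_wderiv_def by blast
  moreover have "f x = f' x" "f 0 = f' 0" using x assms(2) by auto
  ultimately show "f' x = f' 0 + (LINT t:{0..x}|lborel. g t)" by simp
qed

lemma AE2:
  assumes "is_wderiv u u1" "is_wderiv u1 u2" "is_wderiv u u1'" "is_wderiv u1' u2'"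
  shows "AE x in lborel. x \<in> S01 \<longrightarrow> u2 x = u2' x"
proof -
  have "AE x in lborel. x \<in> S01 \<longrightarrow> u1 x = u1' x" by (rule wd_ae[OF assms(1,3)])
  then have eq: "u1 x = u1' x" if "x \<in> S01" for x
    by (rule cont_ae_eq[OF wd_cont[OF assms(2)] wd_cont[OF assms(4)] _ that])
  have "is_wderiv u1 u2'" by (rule wd_cong_S01[OF assms(4)]) (simp add: eq)
  then show ?thesis by (rule wd_ae[OF assms(2)])
qed

lemma mu_alt: "mu k f = (LINT x:S01|lborel. pp k x * f x)"
  unfolding mu_def pp_def ..

lemma mu_congAE:
  assumes "L2 f" "L2 g" "AE x in lborel. x \<in> S01 \<longrightarrow> f x = g x"
  shows "mu k f = mu k g"
  unfolding mu_alt
  by (rule LINT_congAE[OF L2_mult[OF pp_L2 assms(1)] L2_mult[OF pp_L2 assms(2)]])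
     (use assms(3) in \<open>auto elim: eventually_mono\<close>)

lemma L2_cnj: assumes "L2 f" shows "L2 (\<lambda>x. cnj (f x))"
  using assms unfolding L2_def by (auto intro: sbm_cnj)

lemma LINT_cnj: "(LINT x:A|lborel. cnj (f x)) = cnj (LINT x:A|lborel. f x)"
  unfolding set_lebesgue_integral_def
proof -
  have "(\<lambda>x. indicator A x *\<^sub>R cnj (f x)) = (\<lambda>x. cnj (indicator A x *\<^sub>R f x))" by (simp add: fun_eq_iff)
  then show "(\<integral>x. indicator A x *\<^sub>R cnj (f x) \<partial>lborel) = cnj (\<integral>x. indicator A x *\<^sub>R f x \<partial>lborel)"
    by (simp only: Bochner_Integration.integral_cnj)
qed

lemma dBR:
  assumes Lh: "L2 h"
    and H: "\<And>\<phi> \<phi>'. \<phi> \<in> H10 \<Longrightarrow> is_wderiv \<phi> \<phi>' \<Longrightarrow> (LINT x:S01|lborel. h x * \<phi>' x) = 0"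
  shows "AE x in lborel. x \<in> S01 \<longrightarrow> h x = (LINT x:S01|lborel. h x)"
proof -
  define c where "c = (LINT x:S01|lborel. h x)"
  define k where "k = (\<lambda>x. h x - c)"
  have Lk: "L2 k"
  proof -
    have "L2 (\<lambda>x. 1 * h x + (-c) * 1)" by (rule L2_lin[OF Lh cont_L2]) simp
    then show ?thesis by (simp add: k_def)
  qed
  define \<psi> where "\<psi> = (\<lambda>x. cnj (k x))"
  have Lpsi: "L2 \<psi>" unfolding \<psi>_def by (rule L2_cnj[OF Lk])
  define \<Phi> where "\<Phi> = (\<lambda>x. 0 + (LINT t:{0..x}|lborel. \<psi> t))"
  have PH: "is_wderiv \<Phi> \<psi>" unfolding \<Phi>_def by (rule wd_anti[OF Lpsi])
  have Ik: "(LINT x:S01|lborel. k x) = 0"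
  proof -
    have "(LINT x:S01|lborel. k x) = (LINT x:S01|lborel. h x) - (LINT x:S01|lborel. c)"
      unfolding k_def by (rule set_integral_diff(2)[OF L2_si[OF Lh] si_const])
    also have "(LINT x:S01|lborel. c) = c" by (subst set_integral_const) auto
    finally show ?thesis by (simp add: c_def)
  qed
  have P0: "\<Phi> 0 = 0" unfolding \<Phi>_def using LINT_00[OF Lpsi] by simp
  have P1: "\<Phi> 1 = 0" unfolding \<Phi>_def \<psi>_def using Ik by (simp add: LINT_cnj)
  have PH10: "\<Phi> \<in> H10" using PH P0 P1 unfolding H10_def H1_def by blast
  have e1: "(LINT x:S01|lborel. h x * \<psi> x) = 0" by (rule H[OF PH10 PH])
  have e2: "(LINT x:S01|lborel. c * \<psi> x) = 0"
    using Ik by (simp add: \<psi>_def LINT_cnj)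
  have "(LINT x:S01|lborel. k x * \<psi> x) = (LINT x:S01|lborel. 1 * (h x * \<psi> x) + (-1) * (c * \<psi> x))"
    by (simp add: k_def algebra_simps)
  also have "\<dots> = 0"
    using LINT_lin2[OF L2_mult[OF Lh Lpsi] L2_mult[OF cont_L2[OF continuous_on_const] Lpsi], where a=1 and b="-1"] e1 e2
    by simp
  finally have "(LINT x:S01|lborel. k x * \<psi> x) = 0" .
  moreover have "(LINT x:S01|lborel. k x * \<psi> x) = complex_of_real (LINT x:S01|lborel. (cmod (k x))^2)"
  proof -
    have fe: "(\<lambda>x. k x * \<psi> x) = (\<lambda>x. complex_of_real ((cmod (k x))^2))"
      unfolding \<psi>_def by (simp only: complex_norm_square)
    show ?thesis unfolding fe by (rule set_integral_complex_of_real)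
  qed
  ultimately have z: "(LINT x:S01|lborel. (cmod (k x))^2) = 0" by simp
  have ik: "integrable lborel (\<lambda>x. indicator S01 x *\<^sub>R (cmod (k x))^2)"
    using Lk by (simp add: L2_def set_integrable_def)
  have "AE x in lborel. indicator S01 x *\<^sub>R (cmod (k x))^2 = 0"
    using z integral_nonneg_eq_0_iff_AE[OF ik] unfolding set_lebesgue_integral_def by simp
  then show ?thesis
    by (rule eventually_mono) (auto simp: k_def c_def indicator_def)
qed


lemma mu_neg: "mu k (\<lambda>x. - g x) = - mu k g"
  unfolding mu_alt set_lebesgue_integral_def by simp

lemma mu0_eq: "mu 0 f = (LINT x:S01|lborel. f x)"
  unfolding mu_alt pp_def by simp

lemma emb_eq: "emb f v = (LINT x:S01|lborel. f x * v x)"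
  unfolding emb_def ..

definition RHS :: "nat \<Rightarrow> complex \<Rightarrow> fn \<Rightarrow> bool" where
  "RHS n y u \<longleftrightarrow> u \<in> H3 \<and> (\<exists>u1 u2. is_wderiv u u1 \<and> is_wderiv u1 u2 \<and>
            mu n u = y * mu 0 u \<and>
            mu n (\<lambda>x. u2 x - gamma n u * pp (n-2) x)
              = y * mu 0 (\<lambda>x. u2 x - gamma n u * pp (n-2) x) \<and>
            mu 0 (\<lambda>x. u2 x - gamma n u * pp (n-2) x)
              = (u 1 - u 0) * cnj y - u 1)"

lemma AY_H10:
  assumes uH: "u \<in> H1" and ph: "\<phi> \<in> H10"
  shows "A_Y n y u \<phi> = gU n u \<phi>"
proof -
  have "\<phi> \<in> H1T" "\<phi> 0 = 0" "\<phi> 1 = 0" using ph by (auto simp: H10_def H1T_def)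
  then show ?thesis by (simp add: A_Y_def Idm_val[OF uH] WW_def delta1_def)
qed

lemma sub1:
  assumes uD: "u \<in> D_AY2 n y"
  shows "RHS n y u"
proof -
  have uH: "u \<in> H1" and C1: "mu n u = y * mu 0 u" using uD by (auto simp: D_AY2_def D_AY_def)
  obtain w where wD: "w \<in> D_AY n y" and Aw: "\<forall>v\<in>H1T. A_Y n y u v = emb w v"
    using uD by (auto simp: D_AY2_def)
  have wH: "w \<in> H1" and Cw: "mu n w = y * mu 0 w" using wD by (auto simp: D_AY_def)
  define U where "U = wd u"
  have UD: "is_wderiv u U" unfolding U_def by (rule wd_wd[OF uH])
  define g0 where "g0 = gamma n u"
  define q where "q = (\<lambda>x. g0 * pp (n-2) x - w x)"
  have qH: "q \<in> H1"
  proof -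
    have "(\<lambda>x. g0 * pp (n-2) x + (-1) * w x) \<in> H1" by (rule H1_lin[OF pp_H1 wH])
    then show ?thesis by (simp add: q_def)
  qed
  have Lq: "L2 q" by (rule H1_L2[OF qH])
  define Q where "Q = (\<lambda>x. 0 + (LINT t:{0..x}|lborel. q t))"
  have QD: "is_wderiv Q q" unfolding Q_def by (rule wd_anti[OF Lq])
  have LU: "L2 U" and LQ: "L2 Q" using wd_L2[OF UD] wd_L2u[OF QD] .
  have LUQ: "L2 (\<lambda>x. U x - Q x)"
  proof -
    have "L2 (\<lambda>x. 1 * U x + (-1) * Q x)" by (rule L2_lin[OF LU LQ])
    then show ?thesis by simp
  qed
  have KI: "(LINT x:S01|lborel. (U x - Q x) * \<phi>' x) = 0" if ph: "\<phi> \<in> H10" and ph': "is_wderiv \<phi> \<phi>'" for \<phi> \<phi>'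
  proof -
    have phH: "\<phi> \<in> H1" and phT: "\<phi> \<in> H1T" and ph01: "\<phi> 0 = 0" "\<phi> 1 = 0"
      using ph by (auto simp: H10_def H1T_def)
    have Lph: "L2 \<phi>" by (rule H1_L2[OF phH])
    have Lph': "L2 \<phi>'" by (rule wd_L2[OF ph'])
    have "gU n u \<phi> = emb w \<phi>" using Aw phT AY_H10[OF uH ph, of n y] by simp
    then have e1: "(LINT x:S01|lborel. U x * \<phi>' x) + g0 * (LINT x:S01|lborel. pp (n-2) x * \<phi> x) = (LINT x:S01|lborel. w x * \<phi> x)"
      unfolding gU_eq[OF uH UD phH ph'] emb_eq g0_def .
    have e2: "(LINT x:S01|lborel. q x * \<phi> x) = u0 - (LINT x:S01|lborel. Q x * \<phi>' x)" if "u0 = Q 1 * \<phi> 1 - Q 0 * \<phi> 0" for u0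
      using ibp[OF QD ph'] that by simp
    have e2': "(LINT x:S01|lborel. q x * \<phi> x) = - (LINT x:S01|lborel. Q x * \<phi>' x)"
      using e2[of 0] ph01 by simp
    have e3: "(LINT x:S01|lborel. q x * \<phi> x) = g0 * (LINT x:S01|lborel. pp (n-2) x * \<phi> x) + (-1) * (LINT x:S01|lborel. w x * \<phi> x)"
    proof -
      have "(LINT x:S01|lborel. q x * \<phi> x) = (LINT x:S01|lborel. g0 * (pp (n-2) x * \<phi> x) + (-1) * (w x * \<phi> x))"
        by (simp add: q_def algebra_simps)
      also have "\<dots> = g0 * (LINT x:S01|lborel. pp (n-2) x * \<phi> x) + (-1) * (LINT x:S01|lborel. w x * \<phi> x)"
        by (rule LINT_lin2[OF L2_mult[OF pp_L2 Lph] L2_mult[OF H1_L2[OF wH] Lph]])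
      finally show ?thesis .
    qed
    have "(LINT x:S01|lborel. (U x - Q x) * \<phi>' x) = (LINT x:S01|lborel. 1 * (U x * \<phi>' x) + (-1) * (Q x * \<phi>' x))"
      by (simp add: algebra_simps)
    also have "\<dots> = (LINT x:S01|lborel. U x * \<phi>' x) - (LINT x:S01|lborel. Q x * \<phi>' x)"
      using LINT_lin2[OF L2_mult[OF LU Lph'] L2_mult[OF LQ Lph'], where a=1 and b="-1"] by simp
    also have "\<dots> = 0" using e1 e2' e3 by (simp add: algebra_simps)
    finally show ?thesis .
  qed
  define c where "c = (LINT x:S01|lborel. U x - Q x)"
  have AEc: "AE x in lborel. x \<in> S01 \<longrightarrow> U x - Q x = c"
    unfolding c_def by (rule dBR[OF LUQ KI])
  define U1 where "U1 = (\<lambda>x. c + (LINT t:{0..x}|lborel. q t))"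
  have U1D: "is_wderiv U1 q" unfolding U1_def by (rule wd_anti[OF Lq])
  have uU1: "is_wderiv u U1"
  proof (rule wd_congAE[OF UD wd_L2u[OF U1D]])
    show "AE x in lborel. x \<in> S01 \<longrightarrow> U x = U1 x"
      using AEc by (rule eventually_mono) (auto simp: U1_def Q_def)
  qed
  have H3: "u \<in> H3" unfolding H3_def using uU1 U1D qH by blast
  have qf: "(\<lambda>x. q x - gamma n u * pp (n-2) x) = (\<lambda>x. - w x)" by (simp add: q_def g0_def fun_eq_iff)
  have fw: "(\<lambda>x. - q x + gamma n u * pp (n-2) x) = w" by (simp add: q_def g0_def fun_eq_iff)
  have K1: "A_Y n y u (\<lambda>_. 1) = (LINT x:S01|lborel. w x * 1) - ((LINT x:S01|lborel. w x) + cY y u) * 1"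
    using KEY[OF uU1 U1D const_H1T[of 1], of n y] by (simp add: q_def g0_def)
  have K2: "A_Y n y u (\<lambda>_. 1) = (LINT x:S01|lborel. w x * 1)" using Aw const_H1T[of 1] by (simp add: emb_eq)
  have Iw: "(LINT x:S01|lborel. w x) = - cY y u" using K1 K2 by simp
  have C3: "mu 0 (\<lambda>x. q x - gamma n u * pp (n-2) x) = (u 1 - u 0) * cnj y - u 1"
    unfolding qf mu_neg mu0_eq Iw by (simp add: cY_def algebra_simps)
  have C2: "mu n (\<lambda>x. q x - gamma n u * pp (n-2) x) = y * mu 0 (\<lambda>x. q x - gamma n u * pp (n-2) x)"
    unfolding qf mu_neg Cw by simp
  show ?thesis unfolding RHS_def using H3 uU1 U1D C1 C2 C3 by blast
qed

lemma sub2: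
  assumes R: "RHS n y u"
  shows "u \<in> D_AY2 n y"
proof -
  obtain U1 U2 where U1D: "is_wderiv u U1" and U2D: "is_wderiv U1 U2" and U2H: "U2 \<in> H1"
    using R unfolding RHS_def H3_def by blast
  obtain u1 u2 where u1D: "is_wderiv u u1" and u2D: "is_wderiv u1 u2" and C1: "mu n u = y * mu 0 u"
    and C2: "mu n (\<lambda>x. u2 x - gamma n u * pp (n-2) x) = y * mu 0 (\<lambda>x. u2 x - gamma n u * pp (n-2) x)"
    and C3: "mu 0 (\<lambda>x. u2 x - gamma n u * pp (n-2) x) = (u 1 - u 0) * cnj y - u 1"
    using R unfolding RHS_def by blast
  have uH: "u \<in> H1" using U1D unfolding H1_def by blast
  have AE: "AE x in lborel. x \<in> S01 \<longrightarrow> U2 x = u2 x" by (rule AE2[OF U1D U2D u1D u2D])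
  have L1: "L2 (\<lambda>x. U2 x - gamma n u * pp (n-2) x)"
  proof -
    have "L2 (\<lambda>x. 1 * U2 x + (- gamma n u) * pp (n-2) x)" by (rule L2_lin[OF wd_L2[OF U2D] pp_L2])
    then show ?thesis by simp
  qed
  have L2': "L2 (\<lambda>x. u2 x - gamma n u * pp (n-2) x)"
  proof -
    have "L2 (\<lambda>x. 1 * u2 x + (- gamma n u) * pp (n-2) x)" by (rule L2_lin[OF wd_L2[OF u2D] pp_L2])
    then show ?thesis by simp
  qed
  have mueq: "mu k (\<lambda>x. U2 x - gamma n u * pp (n-2) x) = mu k (\<lambda>x. u2 x - gamma n u * pp (n-2) x)" for k
    by (rule mu_congAE[OF L1 L2']) (use AE in \<open>auto elim: eventually_mono\<close>)
  define w where "w = (\<lambda>x. - U2 x + gamma n u * pp (n-2) x)"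
  have wH: "w \<in> H1"
  proof -
    have "(\<lambda>x. (-1) * U2 x + gamma n u * pp (n-2) x) \<in> H1" by (rule H1_lin[OF U2H pp_H1])
    then show ?thesis by (simp add: w_def)
  qed
  have wneg: "w = (\<lambda>x. - (U2 x - gamma n u * pp (n-2) x))" by (simp add: w_def fun_eq_iff)
  have muw: "mu k w = - mu k (\<lambda>x. u2 x - gamma n u * pp (n-2) x)" for k
    unfolding wneg mu_neg mueq ..
  have wD: "w \<in> D_AY n y" using wH C2 by (simp add: D_AY_def muw)
  have uD: "u \<in> D_AY n y" using uH C1 by (simp add: D_AY_def)
  have Iw: "(LINT x:S01|lborel. w x) + cY y u = 0"
    using muw[of 0] C3 unfolding mu0_eq by (simp add: cY_def algebra_simps)
  have "\<forall>v\<in>H1T. A_Y n y u v = emb w v"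
  proof
    fix v assume v: "v \<in> H1T"
    show "A_Y n y u v = emb w v"
      using KEY[OF U1D U2D v, of n y] Iw unfolding emb_eq w_def by simp
  qed
  then show ?thesis using uD wD unfolding D_AY2_def by blast
qed

lemma second:
  assumes uD: "u \<in> D_AY2 n y" and u1D: "is_wderiv u u1" and u2D: "is_wderiv u1 u2" and v: "v \<in> H1T"
  shows "A_Y n y u v = emb (\<lambda>x. - u2 x + gamma n u * pp (n-2) x) v"
proof -
  obtain U1 U2 where U1D: "is_wderiv u U1" and U2D: "is_wderiv U1 U2"
    and C3: "mu 0 (\<lambda>x. U2 x - gamma n u * pp (n-2) x) = (u 1 - u 0) * cnj y - u 1"
    using sub1[OF uD] unfolding RHS_def by blast
  have AE: "AE x in lborel. x \<in> S01 \<longrightarrow> U2 x = u2 x" by (rule AE2[OF U1D U2D u1D u2D])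
  have L1: "L2 (\<lambda>x. U2 x - gamma n u * pp (n-2) x)"
  proof -
    have "L2 (\<lambda>x. 1 * U2 x + (- gamma n u) * pp (n-2) x)" by (rule L2_lin[OF wd_L2[OF U2D] pp_L2])
    then show ?thesis by simp
  qed
  have L2': "L2 (\<lambda>x. u2 x - gamma n u * pp (n-2) x)"
  proof -
    have "L2 (\<lambda>x. 1 * u2 x + (- gamma n u) * pp (n-2) x)" by (rule L2_lin[OF wd_L2[OF u2D] pp_L2])
    then show ?thesis by simp
  qed
  have mueq: "mu 0 (\<lambda>x. U2 x - gamma n u * pp (n-2) x) = mu 0 (\<lambda>x. u2 x - gamma n u * pp (n-2) x)"
    by (rule mu_congAE[OF L1 L2']) (use AE in \<open>auto elim: eventually_mono\<close>)
  have fneg: "(\<lambda>x. - u2 x + gamma n u * pp (n-2) x) = (\<lambda>x. - (u2 x - gamma n u * pp (n-2) x))"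
    by (simp add: fun_eq_iff)
  have If: "(LINT x:S01|lborel. - u2 x + gamma n u * pp (n-2) x) + cY y u = 0"
    using C3 mueq mu_neg[of 0 "\<lambda>x. u2 x - gamma n u * pp (n-2) x"] unfolding mu0_eq fneg
    by (simp add: cY_def algebra_simps)
  show ?thesis using KEY[OF u1D u2D v, of n y] If unfolding emb_eq by simp
qed

theorem mainTheorem15:
  fixes n :: nat and y :: complex
  assumes "n \<ge> 2"
  shows "D_AY2 n y = {u. u \<in> H3 \<and> (\<exists>u1 u2. is_wderiv u u1 \<and> is_wderiv u1 u2 \<and>
            mu n u = y * mu 0 u \<and>
            mu n (\<lambda>x. u2 x - gamma n u * of_real ((1 - x) ^ (n - 2)))
              = y * mu 0 (\<lambda>x. u2 x - gamma n u * of_real ((1 - x) ^ (n - 2))) \<and>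
            mu 0 (\<lambda>x. u2 x - gamma n u * of_real ((1 - x) ^ (n - 2)))
              = (u 1 - u 0) * cnj y - u 1)} \<and>
         (\<forall>u \<in> D_AY2 n y. \<forall>u1 u2. is_wderiv u u1 \<and> is_wderiv u1 u2 \<longrightarrow>
            (\<forall>v \<in> H1T. A_Y n y u v
               = emb (\<lambda>x. - u2 x + gamma n u * of_real ((1 - x) ^ (n - 2))) v))"
proof -
  have ppe: "\<And>x k. complex_of_real ((1 - x)^k) = pp k x" by (simp add: pp_def)
  have S: "D_AY2 n y = {u. RHS n y u}" using sub1 sub2 by blast
  have T: "\<forall>u \<in> D_AY2 n y. \<forall>u1 u2. is_wderiv u u1 \<and> is_wderiv u1 u2 \<longrightarrow>
            (\<forall>v \<in> H1T. A_Y n y u v = emb (\<lambda>x. - u2 x + gamma n u * pp (n-2) x) v)"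
    using second by blast
  show ?thesis unfolding ppe using S T unfolding RHS_def by blast
qed

end
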